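(* Let $K\ge 2$, $\mathbf{V}\in\mathbb{C}^{n\times r}$, $i\in[n]$, and $\boldsymbol{\phi}^*\in\mathcal{H}_r$. If two distinct hypersurfaces from coordinate group $i$, i.e. $\mathcal{H}_{i,m_1}$ and $\mathcal{H}_{i,m_2}$ with $m_1\ne m_2$ in $\{0,\dots,B_K-1\}$, both contain $\boldsymbol{\phi}^*$, then $\mathbf{V}_{i,:}\mathbf{c}(\boldsymbol{\phi}^* )=0$, and consequently all $B_K$ hypersurfaces $\mathcal{H}_{i,0},\dots,\mathcal{H}_{i,B_K-1}$ contain $\boldsymbol{\phi}^*$.
   Context: $B_K=K/2$ if $K$ is even and $B_K=K$ if $K$ is odd; $\vartheta_m=\pi(2m+1)/K$. $\mathcal{H}_r=(-\pi/2,\pi/2]^{2r-2}\times(-\pi/K,\pi/K]$. For $\boldsymbol{\phi}\in\mathcal{H}_r$, $\tilde{\mathbf{c}}(\boldsymbol{\phi})\in\mathbb{R}^{2r}$ is given by $\tilde c_1=\sin\phi_1$, $\tilde c_k=(\prod_{l<k}\cos\phi_l)\sin\phi_k$ for $2\le k\le 2r-1$, $\tilde c_{2r}=(\prod_{l=1}^{2r-2}\cos\phi_l)\cos\phi_{2r-1}$, and $\mathbf{c}(\boldsymbol{\phi})\in\mathbb{C}^r$ by $c_j=\tilde c_{2j}+\mathrm{i}\tilde c_{2j-1}$. The hypersurface for coordinate $i$ and boundary index $m$ is $\mathcal{H}_{i,m}=\{\boldsymbol{\phi}\in\mathcal{H}_r:\mathrm{Im}(e^{-\mathrm{i}\vartheta_m}\mathbf{V}_{i,:}\mathbf{c}(\boldsymbol{\phi}))=0\}$.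 *)

theory Defs
  imports Complex_Main
begin

text \<open>Indices are 1-based as in the paper. Angles phi are functions nat => real;
 only the coordinates 1..2r-1 matter. V is an n x r complex matrix given as
 V :: nat => nat => complex with rows 1..n and columns 1..r.\<close>

definition B :: "nat \<Rightarrow> nat" where
  "B K = (if even K then K div 2 else K)"

definition theta :: "nat \<Rightarrow> nat \<Rightarrow> real" where
  "theta K m = pi * (2 * real m + 1) / real K"

definition Hr :: "nat \<Rightarrow> nat \<Rightarrow> (nat \<Rightarrow> real) set" where
  "Hr K r = {phi. (\<forall>l\<in>{1..2*r-2}. - pi/2 < phi l \<and> phi l \<le> pi/2)
                 \<and> - pi / real K < phi (2*r-1) \<and> phi (2*r-1) \<le> pi / real K}"

definition ctil :: "nat \<Rightarrow> (nat \<Rightarrow> real) \<Rightarrow> nat \<Rightarrow> real" where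
  "ctil r phi k = (if k = 2*r
      then (\<Prod>l\<in>{1..2*r-2}. cos (phi l)) * cos (phi (2*r-1))
      else (\<Prod>l\<in>{1..<k}. cos (phi l)) * sin (phi k))"

definition cvec :: "nat \<Rightarrow> (nat \<Rightarrow> real) \<Rightarrow> nat \<Rightarrow> complex" where
  "cvec r phi j = Complex (ctil r phi (2*j)) (ctil r phi (2*j-1))"

definition row_prod :: "nat \<Rightarrow> (nat \<Rightarrow> nat \<Rightarrow> complex) \<Rightarrow> nat \<Rightarrow> (nat \<Rightarrow> real) \<Rightarrow> complex" where
  "row_prod r V i phi = (\<Sum>j=1..r. V i j * cvec r phi j)"

definition Hsurf :: "nat \<Rightarrow> nat \<Rightarrow> (nat \<Rightarrow> nat \<Rightarrow> complex) \<Rightarrow> nat \<Rightarrow> nat \<Rightarrow> (nat \<Rightarrow> real) set" where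
  "Hsurf K r V i m = {phi \<in> Hr K r.
      Im (exp (- \<i> * complex_of_real (theta K m)) * row_prod r V i phi) = 0}"

end

theory Submission
  imports Defs
begin

lemma im_rot: "Im (exp (- \<i> * complex_of_real t) * z) = Im z * cos t - Re z * sin t"
proof -
  have "exp (- \<i> * complex_of_real t) = Complex (cos t) (- sin t)"
    by (simp add: exp_eq_polar cis.ctr Complex_eq)
  then show ?thesis by simp
qed

lemma int_bound:
  fixes j d k :: int
  assumes "2 * d = j * k" "k \<ge> 2" "d \<noteq> 0"
    and "if even k then 2 * \<bar>d\<bar> < k else \<bar>d\<bar> < k"
  shows False
proof -
  have "\<bar>2 * d\<bar> = \<bar>j * k\<bar>" using assms(1) by simp
  hence a: "\<bar>j\<bar> * k = 2 * \<bar>d\<bar>" using assms(2) by (simp add: abs_mult)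
  have "2 * \<bar>d\<bar> < 2 * k" using assms(4) by (auto split: if_splits)
  hence "\<bar>j\<bar> * k < 2 * k" using a by simp
  hence j2: "\<bar>j\<bar> < 2" using assms(2) by (simp add: mult_less_cancel_right)
  have "j \<noteq> 0" using assms(1,3) by auto
  hence "\<bar>j\<bar> = 1" using j2 by linarith
  hence "k = 2 * \<bar>d\<bar>" using a by simp
  then show False using assms(4) by auto
qed

theorem corollary3:
  fixes K n r i m1 m2 :: nat and V :: "nat \<Rightarrow> nat \<Rightarrow> complex" and phi :: "nat \<Rightarrow> real"
  assumes "K \<ge> 2" and "r \<ge> 1" and "i \<in> {1..n}" and "phi \<in> Hr K r"
    and "m1 < B K" and "m2 < B K" and "m1 \<noteq> m2"
    and "phi \<in> Hsurf K r V i m1" and "phi \<in> Hsurf K r V i m2"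
  shows "row_prod r V i phi = 0 \<and> (\<forall>m < B K. phi \<in> Hsurf K r V i m)"
proof -
  define z where "z = row_prod r V i phi"
  define t1 where "t1 = theta K m1"
  define t2 where "t2 = theta K m2"
  have e1: "Im z * cos t1 - Re z * sin t1 = 0"
    using assms(8) unfolding Hsurf_def mem_Collect_eq z_def t1_def im_rot by blast
  have e2: "Im z * cos t2 - Re z * sin t2 = 0"
    using assms(9) unfolding Hsurf_def mem_Collect_eq z_def t2_def im_rot by blast
  have sne: "sin (t1 - t2) \<noteq> 0"
  proof
    assume "sin (t1 - t2) = 0"
    then obtain j :: int where j: "t1 - t2 = j * pi" by (auto simp: sin_zero_iff_int2)
    have "t1 - t2 = pi * (2 * (real m1 - real m2)) / real K"
      unfolding t1_def t2_def theta_def by (simp add: diff_divide_distrib[symmetric] algebra_simps)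
    with j have "pi * (2 * (real m1 - real m2)) = j * pi * real K"
      using assms(1) by (simp add: field_simps)
    hence "2 * (real m1 - real m2) = j * real K" by simp
    hence "real_of_int (2 * (int m1 - int m2)) = real_of_int (j * int K)" by simp
    hence eq: "2 * (int m1 - int m2) = j * int K" by (simp only: of_int_eq_iff)
    show False
    proof (rule int_bound[OF eq])
      show "2 \<le> int K" using assms(1) by simp
      show "int m1 - int m2 \<noteq> 0" using assms(7) by simp
      show "if even (int K) then 2 * \<bar>int m1 - int m2\<bar> < int K else \<bar>int m1 - int m2\<bar> < int K"
        using assms(5,6) by (auto simp: B_def elim!: evenE)
    qed
  qed
  have "sin (t1 - t2) * Im z = 0" "sin (t1 - t2) * Re z = 0"
    using e1 e2 unfolding sin_diff by algebra+
  hence "Im z = 0" "Re z = 0" using sne by auto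
  hence z0: "z = 0" by (simp add: complex_eq_iff)
  show ?thesis using z0 assms(4) by (simp add: z_def Hsurf_def)
qed

end
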